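(* Let $0<\varepsilon_1<\varepsilon_2<1$ and let $\psi:[0,1]\to[0,1]$ be a strictly increasing continuous function with $\psi(\varepsilon_1)=\varepsilon_1$ and $\psi(\varepsilon_2)=\varepsilon_2$; write $\psi_1=\psi|_{[0,\varepsilon_1]}$, $\psi_2=\psi|_{[\varepsilon_1,\varepsilon_2]}$, $\psi_3=\psi|_{[\varepsilon_2,1]}$. Let $a_0=b_0=c_0=1$ and for $k\ge1$ define the $k$-fold integrals $$a_k=\Big\{{\varepsilon_1\atop 0},{\psi_1\atop 0},\dots,{\psi_1\atop 0}\Big\},\quad b_k=\Big\{{\varepsilon_2\atop \varepsilon_1},{\psi_2\atop \varepsilon_1},\dots,{\psi_2\atop \varepsilon_1}\Big\},$$ $$c_k=\Big\{{1\atop \varepsilon_2},{\psi_3\atop \varepsilon_2},\dots,{\psi_3\atop \varepsilon_2}\Big\},\quad d_k=\Big\{{1\atop 0},{\psi\atop 0},\dots,{\psi\atop 0}\Big\}.$$ Then for $n=1,2,\dots$, $$d_n=\sum_{k=0}^n c_k\sum_{l=0}^{n-k}b_l\,a_{n-k-l}.$$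
   Context: For functions (or constants) $\alpha_i,\beta_i$, the symbol $\Big\{{\alpha_1\atop\beta_1},\dots,{\alpha_n\atop\beta_n}\Big\}$ denotes the iterated integral $\int_{\beta_1}^{\alpha_1}\int_{\beta_2(x_1)}^{\alpha_2(x_1)}\cdots\int_{\beta_n(x_{n-1})}^{\alpha_n(x_{n-1})}dx_n\cdots dx_1$ (here the first limits $\alpha_1,\beta_1$ are constants). In each of $a_k,b_k,c_k,d_k$ there are $k$ entries, the first one being the constant-limit entry shown and the remaining $k-1$ entries being the repeated entry shown. *)

theory Defs
  imports "HOL-Analysis.Analysis"
begin

definition oint :: "real \<Rightarrow> real \<Rightarrow> (real \<Rightarrow> real) \<Rightarrow> real" where
  "oint lo hi f = (if lo \<le> hi then integral {lo..hi} f else - integral {hi..lo} f)"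

text \<open>Inner part of the iterated integral with the repeated entry (alpha over beta):
  itint_inner alpha beta m x is the m-fold integral over x_2..x_{m+1} given the
  outer variable x, with limits beta(x_{j-1}) .. alpha(x_{j-1}).\<close>
fun itint_inner :: "(real \<Rightarrow> real) \<Rightarrow> (real \<Rightarrow> real) \<Rightarrow> nat \<Rightarrow> real \<Rightarrow> real" where
  "itint_inner \<alpha> \<beta> 0 = (\<lambda>x. 1)"
| "itint_inner \<alpha> \<beta> (Suc m) = (\<lambda>x. oint (\<beta> x) (\<alpha> x) (itint_inner \<alpha> \<beta> m))"

definition itint :: "real \<Rightarrow> real \<Rightarrow> (real \<Rightarrow> real) \<Rightarrow> (real \<Rightarrow> real) \<Rightarrow> nat \<Rightarrow> real" where
  "itint A B \<alpha> \<beta> k = (if k = 0 then 1 else oint B A (itint_inner \<alpha> \<beta> (k - 1)))"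

end

theory Submission
  imports Defs
begin

lemma cont_inner:
  fixes lo :: real and \<psi> :: "real \<Rightarrow> real"
  assumes "lo \<le> 1" and rng: "\<And>x. x \<in> {lo..1} \<Longrightarrow> lo \<le> \<psi> x \<and> \<psi> x \<le> 1"
    and cont: "continuous_on {lo..1} \<psi>"
  shows "continuous_on {lo..1} (itint_inner \<psi> (\<lambda>_. lo) m)"
proof (induction m)
  case 0
  then show ?case by simp
next
  case (Suc m)
  have i: "itint_inner \<psi> (\<lambda>_. lo) m integrable_on {lo..1}"
    using Suc integrable_continuous_interval by blast
  have c1: "continuous_on {lo..1} (\<lambda>t. integral {lo..t} (itint_inner \<psi> (\<lambda>_. lo) m))"
    by (rule indefinite_integral_continuous_1[OF i])
  have c2: "continuous_on {lo..1} ((\<lambda>t. integral {lo..t} (itint_inner \<psi> (\<lambda>_. lo) m)) \<circ> \<psi>)"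
    by (rule continuous_on_compose[OF cont continuous_on_subset[OF c1]]) (use rng in auto)
  show ?case
    by (rule continuous_on_eq[OF c2]) (use rng in \<open>auto simp: oint_def\<close>)
qed

lemma inner_Suc:
  assumes "lo \<le> \<psi> x"
  shows "itint_inner \<psi> (\<lambda>_. lo) (Suc m) x = integral {lo..\<psi> x} (itint_inner \<psi> (\<lambda>_. lo) m)"
  using assms by (simp add: oint_def)

lemma itint_Suc:
  assumes "lo \<le> A"
  shows "itint A lo \<psi> (\<lambda>_. lo) (Suc m) = integral {lo..A} (itint_inner \<psi> (\<lambda>_. lo) m)"
  using assms by (simp add: oint_def itint_def)

theorem lemma4p4:
  fixes \<epsilon>1 \<epsilon>2 :: real and \<psi> :: "real \<Rightarrow> real" and n :: nat
  assumes "0 < \<epsilon>1" and "\<epsilon>1 < \<epsilon>2" and "\<epsilon>2 < 1"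
    and "\<psi> ` {0..1} \<subseteq> {0..1}"
    and "strict_mono_on {0..1} \<psi>"
    and "continuous_on {0..1} \<psi>"
    and "\<psi> \<epsilon>1 = \<epsilon>1" and "\<psi> \<epsilon>2 = \<epsilon>2"
    and "n \<ge> 1"
  shows "itint 1 0 \<psi> (\<lambda>_. 0) n =
    (\<Sum>k=0..n. itint 1 \<epsilon>2 \<psi> (\<lambda>_. \<epsilon>2) k *
       (\<Sum>l=0..n-k. itint \<epsilon>2 \<epsilon>1 \<psi> (\<lambda>_. \<epsilon>1) l * itint \<epsilon>1 0 \<psi> (\<lambda>_. 0) (n - k - l)))"
proof -
  note e1 = assms(1) and e12 = assms(2) and e2 = assms(3) and img = assms(4)
    and sm = assms(5) and cpsi = assms(6) and p1 = assms(7) and p2 = assms(8)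
  define F where "F = itint_inner \<psi> (\<lambda>_. 0)"
  define B where "B = itint_inner \<psi> (\<lambda>_. \<epsilon>1)"
  define C where "C = itint_inner \<psi> (\<lambda>_. \<epsilon>2)"
  define a where "a = itint \<epsilon>1 0 \<psi> (\<lambda>_. 0)"
  define b where "b = itint \<epsilon>2 \<epsilon>1 \<psi> (\<lambda>_. \<epsilon>1)"
  define c where "c = itint 1 \<epsilon>2 \<psi> (\<lambda>_. \<epsilon>2)"
  define d where "d = itint 1 0 \<psi> (\<lambda>_. 0)"
  define e where "e = (\<lambda>j. \<Sum>l=0..j. b l * a (j - l))"
  have mono: "\<psi> x \<le> \<psi> y" if "x \<in> {0..1}" "y \<in> {0..1}" "x \<le> y" for x y
    using sm that by (metis dual_order.order_iff_strict strict_mono_onD)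
  have rng: "\<psi> x \<in> {0..1}" if "x \<in> {0..1}" for x using img that by (auto simp: image_subset_iff)
  have r0: "0 \<le> \<psi> x \<and> \<psi> x \<le> 1" if "x \<in> {0..1}" for x using rng[OF that] by auto
  have r1: "\<epsilon>1 \<le> \<psi> x \<and> \<psi> x \<le> 1" if "x \<in> {\<epsilon>1..1}" for x
    using r0[of x] mono[of \<epsilon>1 x] that e1 e12 e2 p1 by auto
  have r2: "\<epsilon>2 \<le> \<psi> x \<and> \<psi> x \<le> 1" if "x \<in> {\<epsilon>2..1}" for x
    using r0[of x] mono[of \<epsilon>2 x] that e1 e12 e2 p2 by auto
  have r12: "\<psi> x \<le> \<epsilon>2" if "x \<in> {\<epsilon>1..\<epsilon>2}" for x
    using mono[of x \<epsilon>2] that e1 e12 e2 p2 by auto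
  have cF: "continuous_on {0..1} (F m)" for m
    unfolding F_def by (rule cont_inner) (use r0 cpsi in auto)
  have cB: "continuous_on {\<epsilon>1..1} (B m)" for m
    unfolding B_def by (rule cont_inner) (use r1 e12 e2 continuous_on_subset[OF cpsi, of "{\<epsilon>1..1}"] e1 in auto)
  have cC: "continuous_on {\<epsilon>2..1} (C m)" for m
    unfolding C_def by (rule cont_inner) (use r2 e2 e1 e12 continuous_on_subset[OF cpsi, of "{\<epsilon>2..1}"] in auto)
  have iF: "F m integrable_on {x..y}" if "0 \<le> x" "y \<le> 1" for m x y
  proof (cases "x \<le> y")
    case True
    then show ?thesis using that integrable_subinterval_real[OF integrable_continuous_interval[OF cF]] by auto
  qed auto
  have iB: "B m integrable_on {x..y}" if "\<epsilon>1 \<le> x" "y \<le> 1" for m x y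
  proof (cases "x \<le> y")
    case True
    then show ?thesis using that integrable_subinterval_real[OF integrable_continuous_interval[OF cB]] by auto
  qed auto
  have iC: "C m integrable_on {x..y}" if "\<epsilon>2 \<le> x" "y \<le> 1" for m x y
  proof (cases "x \<le> y")
    case True
    then show ?thesis using that integrable_subinterval_real[OF integrable_continuous_interval[OF cC]] by auto
  qed auto
  have aS: "a (Suc m) = integral {0..\<epsilon>1} (F m)" for m
    unfolding a_def F_def using itint_Suc[of 0 \<epsilon>1] e1 by simp
  have bS: "b (Suc m) = integral {\<epsilon>1..\<epsilon>2} (B m)" for m
    unfolding b_def B_def using itint_Suc[of \<epsilon>1 \<epsilon>2] e12 by simp
  have cS: "c (Suc m) = integral {\<epsilon>2..1} (C m)" for m
    unfolding c_def C_def using itint_Suc[of \<epsilon>2 1] e2 by simp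
  have dS: "d (Suc m) = integral {0..1} (F m)" for m
    unfolding d_def F_def using itint_Suc[of 0 1] by simp
  have a0: "a 0 = 1" "b 0 = 1" "c 0 = 1" unfolding a_def b_def c_def itint_def by auto
  have FS: "F (Suc m) x = integral {0..\<psi> x} (F m)" if "x \<in> {0..1}" for m x
    unfolding F_def using inner_Suc[where lo=0 and \<psi>=\<psi> and x=x] r0[OF that] by simp
  have BS: "B (Suc m) x = integral {\<epsilon>1..\<psi> x} (B m)" if "x \<in> {\<epsilon>1..1}" for m x
    unfolding B_def using inner_Suc[where lo=\<epsilon>1 and \<psi>=\<psi> and x=x] r1[OF that] by simp
  have CS: "C (Suc m) x = integral {\<epsilon>2..\<psi> x} (C m)" if "x \<in> {\<epsilon>2..1}" for m x
    unfolding C_def using inner_Suc[where lo=\<epsilon>2 and \<psi>=\<psi> and x=x] r2[OF that] by simp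
  have II: "\<forall>x\<in>{\<epsilon>1..\<epsilon>2}. F m x = (\<Sum>l=0..m. B l x * a (m - l))" for m
  proof (induction m)
    case 0
    then show ?case using a0 by (simp add: F_def B_def)
  next
    case (Suc m)
    show ?case
    proof
      fix x assume x: "x \<in> {\<epsilon>1..\<epsilon>2}"
      have x01: "x \<in> {0..1}" "x \<in> {\<epsilon>1..1}" using x e1 e2 by auto
      have px: "\<epsilon>1 \<le> \<psi> x" "\<psi> x \<le> \<epsilon>2" using r1[OF x01(2)] r12[OF x] by auto
      have "F (Suc m) x = integral {0..\<psi> x} (F m)" by (rule FS[OF x01(1)])
      also have "\<dots> = integral {0..\<epsilon>1} (F m) + integral {\<epsilon>1..\<psi> x} (F m)"
        using Henstock_Kurzweil_Integration.integral_combine[where a=0 and c=\<epsilon>1 and b="\<psi> x" and f="F m"] iF[where x=0 and y="\<psi> x" and m=m] px e1 e2 by auto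
      also have "integral {\<epsilon>1..\<psi> x} (F m) = integral {\<epsilon>1..\<psi> x} (\<lambda>y. \<Sum>l=0..m. B l y * a (m - l))"
        by (rule Henstock_Kurzweil_Integration.integral_cong) (use Suc px in auto)
      also have "\<dots> = (\<Sum>l=0..m. integral {\<epsilon>1..\<psi> x} (\<lambda>y. B l y * a (m - l)))"
        by (rule Henstock_Kurzweil_Integration.integral_sum)
           (use iB px e2 e12 in \<open>auto intro!: integrable_on_mult_left\<close>)
      also have "\<dots> = (\<Sum>l=0..m. B (Suc l) x * a (m - l))"
        using BS[OF x01(2)] by simp
      moreover have "(\<Sum>l=0..Suc m. B l x * a (Suc m - l)) = B 0 x * a (Suc m) + (\<Sum>l=0..m. B (Suc l) x * a (m - l))"
        by (subst sum.atLeast0_atMost_Suc_shift) simp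
      ultimately show "F (Suc m) x = (\<Sum>l=0..Suc m. B l x * a (Suc m - l))"
        using aS by (simp add: B_def)
    qed
  qed
  have IV: "integral {0..\<epsilon>2} (F m) = e (Suc m)" for m
  proof -
    have "integral {0..\<epsilon>2} (F m) = integral {0..\<epsilon>1} (F m) + integral {\<epsilon>1..\<epsilon>2} (F m)"
      using Henstock_Kurzweil_Integration.integral_combine[where a=0 and c=\<epsilon>1 and b=\<epsilon>2 and f="F m"] iF[where x=0 and y=\<epsilon>2 and m=m] e1 e12 e2 by auto
    also have "integral {\<epsilon>1..\<epsilon>2} (F m) = integral {\<epsilon>1..\<epsilon>2} (\<lambda>y. \<Sum>l=0..m. B l y * a (m - l))"
      by (rule Henstock_Kurzweil_Integration.integral_cong) (use II in auto)
    also have "\<dots> = (\<Sum>l=0..m. integral {\<epsilon>1..\<epsilon>2} (\<lambda>y. B l y * a (m - l)))"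
      by (rule Henstock_Kurzweil_Integration.integral_sum)
         (use iB e2 e12 in \<open>auto intro!: integrable_on_mult_left\<close>)
    also have "\<dots> = (\<Sum>l=0..m. b (Suc l) * a (m - l))"
      using bS by simp
    moreover have "e (Suc m) = b 0 * a (Suc m) + (\<Sum>l=0..m. b (Suc l) * a (m - l))"
      unfolding e_def by (subst sum.atLeast0_atMost_Suc_shift) simp
    ultimately show ?thesis
      using aS a0 by simp
  qed
  have III: "\<forall>x\<in>{\<epsilon>2..1}. F m x = (\<Sum>k=0..m. C k x * e (m - k))" for m
  proof (induction m)
    case 0
    then show ?case using a0 by (simp add: F_def C_def e_def)
  next
    case (Suc m)
    show ?case
    proof
      fix x assume x: "x \<in> {\<epsilon>2..1}"
      have x01: "x \<in> {0..1}" using x e1 e12 by auto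
      have px: "\<epsilon>2 \<le> \<psi> x" "\<psi> x \<le> 1" using r2[OF x] by auto
      have "F (Suc m) x = integral {0..\<psi> x} (F m)" by (rule FS[OF x01(1)])
      also have "\<dots> = integral {0..\<epsilon>2} (F m) + integral {\<epsilon>2..\<psi> x} (F m)"
        using Henstock_Kurzweil_Integration.integral_combine[where a=0 and c=\<epsilon>2 and b="\<psi> x" and f="F m"] iF[where x=0 and y="\<psi> x" and m=m] px e1 e12 by auto
      also have "integral {\<epsilon>2..\<psi> x} (F m) = integral {\<epsilon>2..\<psi> x} (\<lambda>y. \<Sum>k=0..m. C k y * e (m - k))"
        by (rule Henstock_Kurzweil_Integration.integral_cong) (use Suc px in auto)
      also have "\<dots> = (\<Sum>k=0..m. integral {\<epsilon>2..\<psi> x} (\<lambda>y. C k y * e (m - k)))"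
        by (rule Henstock_Kurzweil_Integration.integral_sum)
           (use iC px in \<open>auto intro!: integrable_on_mult_left\<close>)
      also have "\<dots> = (\<Sum>k=0..m. C (Suc k) x * e (m - k))"
        using CS[OF x] by simp
      moreover have "(\<Sum>k=0..Suc m. C k x * e (Suc m - k)) = C 0 x * e (Suc m) + (\<Sum>k=0..m. C (Suc k) x * e (m - k))"
        by (subst sum.atLeast0_atMost_Suc_shift) simp
      ultimately show "F (Suc m) x = (\<Sum>k=0..Suc m. C k x * e (Suc m - k))"
        using IV by (simp add: C_def)
    qed
  qed
  obtain m where n: "n = Suc m" using assms(9) by (cases n) auto
  have "d (Suc m) = integral {0..\<epsilon>2} (F m) + integral {\<epsilon>2..1} (F m)"
    using dS Henstock_Kurzweil_Integration.integral_combine[where a=0 and c=\<epsilon>2 and b=1 and f="F m"] iF[where x=0 and y=1 and m=m] e1 e12 e2 by auto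
  also have "integral {\<epsilon>2..1} (F m) = integral {\<epsilon>2..1} (\<lambda>y. \<Sum>k=0..m. C k y * e (m - k))"
    by (rule Henstock_Kurzweil_Integration.integral_cong) (use III in auto)
  also have "\<dots> = (\<Sum>k=0..m. integral {\<epsilon>2..1} (\<lambda>y. C k y * e (m - k)))"
    by (rule Henstock_Kurzweil_Integration.integral_sum)
       (use iC in \<open>auto intro!: integrable_on_mult_left\<close>)
  also have "\<dots> = (\<Sum>k=0..m. c (Suc k) * e (m - k))"
    using cS by simp
  moreover have "(\<Sum>k=0..Suc m. c k * e (Suc m - k)) = c 0 * e (Suc m) + (\<Sum>k=0..m. c (Suc k) * e (m - k))"
    by (subst sum.atLeast0_atMost_Suc_shift) simp
  ultimately have "d (Suc m) = (\<Sum>k=0..Suc m. c k * e (Suc m - k))"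
    using IV a0 by simp
  then show ?thesis
    unfolding n d_def[symmetric] c_def[symmetric] b_def[symmetric] a_def[symmetric] e_def
    by (simp add: diff_diff_add)
qed

end
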